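(* Let $A\in\mathbb{C}^{n\times n}$ with $ind(A)=k$, fix $A^-\in A\{1\}$ and $A^{GD}\in A\{GD\}$, and let $A^{GD1}=A^{GD}AA^-$. Then: (i) there exist idempotent matrices $M,N\in\mathbb{C}^{n\times n}$ such that $A^kA^{-}M=0$, $MA^k=0$, $NA^kA^{-}=0$, $A^kN=0$; (ii) there exists a matrix $X\in\mathbb{C}^{n\times n}$ such that $$\mathrm{rank}\begin{bmatrix} A & I-M\\ I-N & X\end{bmatrix}=\mathrm{rank}(A).$$ Moreover, these hold with $M=I-AA^{GD1}$, $N=I-A^{GD1}A$, and $X=A^{GD1}$.
   Context: For $A\in\mathbb{C}^{n\times n}$, $ind(A)$ is the smallest nonnegative integer $k$ with $\mathrm{rank}(A^k)=\mathrm{rank}(A^{k+1})$; $A^0=I$. $A\{1\}$ is the set of matrices $X$ with $AXA=A$. $A\{GD\}$ is the set of G-Drazin inverses of $A$: matrices $X$ with $AXA=A$, $XA^{k+1}=A^k$, $A^{k+1}X=A^k$. *)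

theory Defs
  imports "Jordan_Normal_Form.DL_Rank"
begin

definition crank :: "complex mat \<Rightarrow> nat" where
  "crank A = vec_space.rank (dim_row A) A"

definition ind :: "complex mat \<Rightarrow> nat" where
  "ind A = (LEAST k. crank (A ^\<^sub>m k) = crank (A ^\<^sub>m (k + 1)))"

definition inner_inverses :: "nat \<Rightarrow> complex mat \<Rightarrow> complex mat set" where
  "inner_inverses n A = {X \<in> carrier_mat n n. A * X * A = A}"

definition GD_inverses :: "nat \<Rightarrow> complex mat \<Rightarrow> complex mat set" where
  "GD_inverses n A = {X \<in> carrier_mat n n. A * X * A = A
      \<and> X * A ^\<^sub>m (ind A + 1) = A ^\<^sub>m (ind A)
      \<and> A ^\<^sub>m (ind A + 1) * X = A ^\<^sub>m (ind A)}"

end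

theory Submission
  imports Defs
begin

lemma rank_mult_left_le:
  fixes P A :: "'a::field mat"
  assumes P: "P \<in> carrier_mat m n" and A: "A \<in> carrier_mat n p"
  shows "vec_space.rank m (P * A) \<le> vec_space.rank n A"
proof -
  let ?V = "module_vec TYPE('a) n"
  let ?W = "module_vec TYPE('a) m"
  define S where "S = LinearCombinations.module.span class_ring ?V (set (cols A))"
  define T where "T = (\<lambda>v. P *\<^sub>v v)"
  have setA: "set (cols A) \<subseteq> carrier_vec n" using A cols_dim carrier_matD(1) by metis
  have subS: "subspace class_ring S ?V"
    unfolding S_def using vectorspace.span_is_subspace[OF vec_vs, of "set (cols A)" n] setA by (simp add: module_vec_simps)
  have vsS: "vectorspace class_ring (?V\<lparr>carrier := S\<rparr>)"
    using vectorspace.subspace_is_vs[OF vec_vs subS] .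
  have Scar: "S \<subseteq> carrier_vec n" using subS unfolding subspace_def submodule_def by (auto simp: module_vec_simps)
  have lm: "linear_map class_ring (?V\<lparr>carrier := S\<rparr>) ?W T"
  proof (auto simp add: linear_map_def)
    show "vectorspace class_ring (?V\<lparr>carrier := S\<rparr>)" by (rule vsS)
    show "vectorspace class_ring ?W" by (rule vec_vs)
    show "mod_hom class_ring (?V\<lparr>carrier := S\<rparr>) ?W T"
    proof (rule mod_hom.intro, unfold mod_hom_axioms_def)
      show "module class_ring (?V\<lparr>carrier := S\<rparr>)" using vsS by (simp add: vectorspace_def)
      show "module class_ring ?W" using vec_module by blast
      show "T \<in> LinearCombinations.module_hom class_ring (?V\<lparr>carrier := S\<rparr>) ?W"
        unfolding LinearCombinations.module_hom_def T_def using Scar P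
        by (auto simp: module_vec_simps mult_mat_vec intro!: mult_add_distrib_mat_vec)
    qed
  qed
  interpret L: linear_map class_ring "?V\<lparr>carrier := S\<rparr>" ?W T by (rule lm)
  have fd: "L.V.fin_dim" unfolding S_def using vec_space.fin_dim_span_cols[OF A] by simp
  have rn: "vectorspace.dim class_ring (?W\<lparr>carrier := L.imT\<rparr>) + vectorspace.dim class_ring (?V\<lparr>carrier := S\<rparr>\<lparr>carrier := L.kerT\<rparr>) = L.V.dim"
    using L.rank_nullity[OF fd] .
  have im: "L.imT = LinearCombinations.module.span class_ring ?W (set (cols (P * A)))"
  proof -
    have imd: "L.imT = T ` S" unfolding mod_hom.im_def[OF L.mod_hom_axioms] by simp
    have cA: "S = {y\<in>carrier_vec (dim_row A). \<exists>x\<in>carrier_vec (dim_col A). A *\<^sub>v x = y}"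
      using vec_space.col_space_eq[OF A] unfolding S_def vec_space.col_space_def by simp
    have PA: "P * A \<in> carrier_mat m p" using P A by auto
    have cPA: "LinearCombinations.module.span class_ring ?W (set (cols (P * A))) = {y\<in>carrier_vec (dim_row (P*A)). \<exists>x\<in>carrier_vec (dim_col (P*A)). (P*A) *\<^sub>v x = y}"
      using vec_space.col_space_eq[OF PA] unfolding vec_space.col_space_def by simp
    have "T ` S = LinearCombinations.module.span class_ring ?W (set (cols (P * A)))"
      unfolding cA cPA T_def using P A
      by (auto simp: assoc_mult_mat_vec)
    then show ?thesis using imd by simp
  qed
  show ?thesis
    unfolding vec_space.rank_def using rn im S_def by simp
qed

lemma rank_mult_right_le:
  fixes B C :: "'a::field mat"
  assumes B: "B \<in> carrier_mat m n" and C: "C \<in> carrier_mat n p"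
  shows "vec_space.rank m (B * C) \<le> vec_space.rank m B"
proof -
  let ?W = "module_vec TYPE('a) m"
  define X where "X = LinearCombinations.module.span class_ring ?W (set (cols (B * C)))"
  define Y where "Y = LinearCombinations.module.span class_ring ?W (set (cols B))"
  have BC: "B * C \<in> carrier_mat m p" using B C by auto
  have setB: "set (cols B) \<subseteq> carrier_vec m" using B cols_dim carrier_matD(1) by metis
  have setBC: "set (cols (B*C)) \<subseteq> carrier_vec m" using BC cols_dim carrier_matD(1) by metis
  have subY: "subspace class_ring Y ?W"
    unfolding Y_def using vectorspace.span_is_subspace[OF vec_vs, of "set (cols B)" m] setB by (simp add: module_vec_simps)
  have subX: "subspace class_ring X ?W"
    unfolding X_def using vectorspace.span_is_subspace[OF vec_vs, of "set (cols (B*C))" m] setBC by (simp add: module_vec_simps)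
  have cB: "Y = {y\<in>carrier_vec (dim_row B). \<exists>x\<in>carrier_vec (dim_col B). B *\<^sub>v x = y}"
    using vec_space.col_space_eq[OF B] unfolding Y_def vec_space.col_space_def by simp
  have cBC: "X = {y\<in>carrier_vec (dim_row (B*C)). \<exists>x\<in>carrier_vec (dim_col (B*C)). (B*C) *\<^sub>v x = y}"
    using vec_space.col_space_eq[OF BC] unfolding X_def vec_space.col_space_def by simp
  have XY: "X \<subseteq> Y" unfolding cB cBC using B C
    by (auto simp: assoc_mult_mat_vec)
  have vsY: "vectorspace class_ring (?W\<lparr>carrier := Y\<rparr>)"
    using vectorspace.subspace_is_vs[OF vec_vs subY] .
  have subXY: "subspace class_ring X (?W\<lparr>carrier := Y\<rparr>)"
    using vectorspace.nested_subspaces[OF vec_vs subY subX XY] .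
  have fdY: "vectorspace.fin_dim class_ring (?W\<lparr>carrier := Y\<rparr>)"
    unfolding Y_def using vec_space.fin_dim_span_cols[OF B] by simp
  have fdX: "vectorspace.fin_dim class_ring (?W\<lparr>carrier := X\<rparr>)"
    unfolding X_def using vec_space.fin_dim_span_cols[OF BC] by simp
  have "vectorspace.dim class_ring ((?W\<lparr>carrier := Y\<rparr>)\<lparr>carrier := X\<rparr>) \<le> vectorspace.dim class_ring (?W\<lparr>carrier := Y\<rparr>)"
    using vectorspace.subspace_dim[OF vsY subXY fdY] fdX by simp
  then show ?thesis unfolding vec_space.rank_def X_def Y_def by simp
qed

lemma pow_mat_comm:
  fixes A :: "'a::semiring_1 mat"
  assumes A: "A \<in> carrier_mat n n"
  shows "A * A ^\<^sub>m k = A ^\<^sub>m k * A"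
proof (induction k)
  case 0 then show ?case using A by simp
next
  case (Suc k)
  have "A * A ^\<^sub>m Suc k = (A * A ^\<^sub>m k) * A" using A by (simp add: assoc_mult_mat[symmetric, of A n n "A ^\<^sub>m k" n A n])
  also have "\<dots> = A ^\<^sub>m Suc k * A" using Suc by simp
  finally show ?case .
qed

lemma mat_minus_self:
  fixes X :: "'a::ring mat"
  assumes "X \<in> carrier_mat m n" shows "X - X = 0\<^sub>m m n"
  using assms by (intro eq_matI) auto

lemma mat_minus_zero:
  fixes X :: "'a::ring mat"
  assumes "X \<in> carrier_mat m n" shows "X - 0\<^sub>m m n = X"
  using assms by (intro eq_matI) auto

lemma one_minus_one_minus:
  fixes P :: "'a::ring_1 mat"
  assumes "P \<in> carrier_mat n n" shows "1\<^sub>m n - (1\<^sub>m n - P) = P"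
  using assms by (intro eq_matI) auto

lemma right_compl_zero:
  fixes X P :: "'a::ring_1 mat"
  assumes X: "X \<in> carrier_mat m n" and P: "P \<in> carrier_mat n n" and XP: "X * P = X"
  shows "X * (1\<^sub>m n - P) = 0\<^sub>m m n"
proof -
  have "X * (1\<^sub>m n - P) = X * 1\<^sub>m n - X * P" using mult_minus_distrib_mat[OF X one_carrier_mat P] .
  also have "\<dots> = X - X" using X XP by simp
  finally show ?thesis using mat_minus_self[OF X] by simp
qed

lemma left_compl_zero:
  fixes Y P :: "'a::ring_1 mat"
  assumes Y: "Y \<in> carrier_mat n m" and P: "P \<in> carrier_mat n n" and PY: "P * Y = Y"
  shows "(1\<^sub>m n - P) * Y = 0\<^sub>m n m"
proof -
  have "(1\<^sub>m n - P) * Y = 1\<^sub>m n * Y - P * Y" using minus_mult_distrib_mat[OF one_carrier_mat P Y] .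
  also have "\<dots> = Y - Y" using Y PY by simp
  finally show ?thesis using mat_minus_self[OF Y] by simp
qed

lemma idem_compl:
  fixes P :: "'a::ring_1 mat"
  assumes P: "P \<in> carrier_mat n n" and PP: "P * P = P"
  shows "(1\<^sub>m n - P) * (1\<^sub>m n - P) = 1\<^sub>m n - P"
proof -
  have c: "1\<^sub>m n - P \<in> carrier_mat n n" using minus_carrier_mat[OF P] by blast
  have "(1\<^sub>m n - P) * (1\<^sub>m n - P) = 1\<^sub>m n * (1\<^sub>m n - P) - P * (1\<^sub>m n - P)"
    by (rule minus_mult_distrib_mat[OF one_carrier_mat P c])
  also have "\<dots> = (1\<^sub>m n - P) - 0\<^sub>m n n" using left_mult_one_mat[OF c] right_compl_zero[OF P P PP] by simp
  also have "\<dots> = 1\<^sub>m n - P" by (rule mat_minus_zero[OF c])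
  finally show ?thesis .
qed

theorem theorem2p9:
  fixes A Am AGD :: "complex mat" and n k :: nat
  assumes "A \<in> carrier_mat n n"
    and "ind A = k"
    and "Am \<in> inner_inverses n A"
    and "AGD \<in> GD_inverses n A"
  shows "(\<exists>M \<in> carrier_mat n n. \<exists>N \<in> carrier_mat n n.
            M * M = M \<and> N * N = N
          \<and> A ^\<^sub>m k * Am * M = 0\<^sub>m n n \<and> M * A ^\<^sub>m k = 0\<^sub>m n n
          \<and> N * A ^\<^sub>m k * Am = 0\<^sub>m n n \<and> A ^\<^sub>m k * N = 0\<^sub>m n n
          \<and> (\<exists>X \<in> carrier_mat n n.
               crank (four_block_mat A (1\<^sub>m n - M) (1\<^sub>m n - N) X) = crank A))
       \<and> (let G1 = AGD * A * Am; M = 1\<^sub>m n - A * G1; N = 1\<^sub>m n - G1 * A in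
            M * M = M \<and> N * N = N
          \<and> A ^\<^sub>m k * Am * M = 0\<^sub>m n n \<and> M * A ^\<^sub>m k = 0\<^sub>m n n
          \<and> N * A ^\<^sub>m k * Am = 0\<^sub>m n n \<and> A ^\<^sub>m k * N = 0\<^sub>m n n
          \<and> crank (four_block_mat A (1\<^sub>m n - M) (1\<^sub>m n - N) G1) = crank A)"
proof -
  have A: "A \<in> carrier_mat n n" using assms(1) .
  from assms(3) have Am: "Am \<in> carrier_mat n n" and AAmA: "A * Am * A = A"
    unfolding inner_inverses_def by auto
  define G where "G = AGD"
  from assms(4) have G: "G \<in> carrier_mat n n" and AGA: "A * G * A = A"
    and GAk1: "G * A ^\<^sub>m (k + 1) = A ^\<^sub>m k" and Ak1G: "A ^\<^sub>m (k + 1) * G = A ^\<^sub>m k"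
    unfolding GD_inverses_def G_def using assms(2) by auto
  have Ak: "A ^\<^sub>m k \<in> carrier_mat n n" using A by simp
  note asc = assoc_mult_mat[of _ n n _ n _ n] mult_carrier_mat[of _ n n _ n]
  have Ak1: "A ^\<^sub>m (k+1) = A * A ^\<^sub>m k" using pow_mat_comm[OF A, of k] by simp
  have Ak1': "A ^\<^sub>m (k+1) = A ^\<^sub>m k * A" by simp
  have fa: "A ^\<^sub>m k * Am * A = A ^\<^sub>m k"
  and fb: "A * Am * A ^\<^sub>m k = A ^\<^sub>m k"
  and fd: "A ^\<^sub>m k * (G * A) = A ^\<^sub>m k"
  proof -
    have "A ^\<^sub>m k * Am * A = A ^\<^sub>m k \<and> A * Am * A ^\<^sub>m k = A ^\<^sub>m k \<and> A ^\<^sub>m k * (G * A) = A ^\<^sub>m k"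
    proof (cases k)
      case 0
      have GA: "G * A = 1\<^sub>m n" using GAk1 A 0 by simp
      have AG: "A * G = 1\<^sub>m n" using Ak1G A 0 by simp
      have "G * (A * Am * A) * G = (G * A) * Am * (A * G)" using A Am G
        by (simp add: asc)
      moreover have "G * (A * Am * A) * G = G" using AAmA GA G by simp
      moreover have "(G * A) * Am * (A * G) = Am" using GA AG Am by simp
      ultimately have AmG: "Am = G" by simp
      show ?thesis using 0 A G AmG GA AG by simp
    next
      case (Suc j)
      have Aj: "A ^\<^sub>m j \<in> carrier_mat n n" using A by simp
      have e1: "A ^\<^sub>m k = A ^\<^sub>m j * A" using Suc by simp
      have e2: "A ^\<^sub>m k = A * A ^\<^sub>m j" using Suc pow_mat_comm[OF A, of j] by simp
      have "A ^\<^sub>m k * Am * A = A ^\<^sub>m j * (A * Am * A)" unfolding e1 using A Am Aj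
        by (simp add: asc)
      then have r1: "A ^\<^sub>m k * Am * A = A ^\<^sub>m k" unfolding AAmA using e1 by simp
      have "A * Am * A ^\<^sub>m k = (A * Am * A) * A ^\<^sub>m j" unfolding e2 using A Am Aj
        by (simp add: asc)
      then have r2: "A * Am * A ^\<^sub>m k = A ^\<^sub>m k" unfolding AAmA using e2 by simp
      have "A ^\<^sub>m k * (G * A) = A ^\<^sub>m j * (A * G * A)" unfolding e1 using A G Aj
        by (simp add: asc)
      then have r3: "A ^\<^sub>m k * (G * A) = A ^\<^sub>m k" unfolding AGA using e1 by simp
      show ?thesis using r1 r2 r3 by blast
    qed
    then show "A ^\<^sub>m k * Am * A = A ^\<^sub>m k" "A * Am * A ^\<^sub>m k = A ^\<^sub>m k" "A ^\<^sub>m k * (G * A) = A ^\<^sub>m k"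
      by auto
  qed
  have fc: "G * A * A ^\<^sub>m k = A ^\<^sub>m k"
    using GAk1 Ak1 assoc_mult_mat[OF G A Ak] by simp
  define G1 where "G1 = AGD * A * Am"
  have G1: "G1 \<in> carrier_mat n n" using G A Am unfolding G1_def G_def[symmetric] by simp
  have "A * G1 = (A * G * A) * Am" unfolding G1_def G_def[symmetric] using A G Am
    by (simp add: asc)
  then have AG1: "A * G1 = A * Am" using AGA by simp
  have "G1 * A = G * (A * Am * A)" unfolding G1_def G_def[symmetric] using A G Am
    by (simp add: asc)
  then have G1A: "G1 * A = G * A" using AAmA by simp
  define P where "P = A * Am"
  define Q where "Q = G * A"
  have P: "P \<in> carrier_mat n n" unfolding P_def using A Am by simp
  have Q: "Q \<in> carrier_mat n n" unfolding Q_def using A G by simp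
  have "P * P = (A * Am * A) * Am" unfolding P_def using A Am
    by (simp add: asc)
  then have PP: "P * P = P" unfolding P_def using AAmA by simp
  have "Q * Q = G * (A * G * A)" unfolding Q_def using A G
    by (simp add: asc)
  then have QQ: "Q * Q = Q" unfolding Q_def using AGA by simp
  have AkAm: "A ^\<^sub>m k * Am \<in> carrier_mat n n" using Ak Am by simp
  have "A ^\<^sub>m k * Am * P = (A ^\<^sub>m k * Am * A) * Am" unfolding P_def using Ak Am A
    by (simp add: asc)
  then have "A ^\<^sub>m k * Am * P = A ^\<^sub>m k * Am" unfolding fa .
  then have i1: "A ^\<^sub>m k * Am * (1\<^sub>m n - P) = 0\<^sub>m n n"
    by (rule right_compl_zero[OF AkAm P])
  have "P * A ^\<^sub>m k = A ^\<^sub>m k" unfolding P_def by (rule fb)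
  then have i2: "(1\<^sub>m n - P) * A ^\<^sub>m k = 0\<^sub>m n n"
    by (rule left_compl_zero[OF Ak P])
  have "Q * A ^\<^sub>m k = A ^\<^sub>m k" unfolding Q_def by (rule fc)
  then have "(1\<^sub>m n - Q) * A ^\<^sub>m k = 0\<^sub>m n n"
    by (rule left_compl_zero[OF Ak Q])
  then have i3: "(1\<^sub>m n - Q) * A ^\<^sub>m k * Am = 0\<^sub>m n n"
    using Am by simp
  have "A ^\<^sub>m k * Q = A ^\<^sub>m k" unfolding Q_def by (rule fd)
  then have i4: "A ^\<^sub>m k * (1\<^sub>m n - Q) = 0\<^sub>m n n"
    by (rule right_compl_zero[OF Ak Q])
  have rk: "crank (four_block_mat A P Q G1) = crank A"
  proof -
    define K where "K = four_block_mat A P Q G1"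
    have K: "K \<in> carrier_mat (n+n) (n+n)" unfolding K_def using A G1 by simp
    define A' where "A' = four_block_mat A (0\<^sub>m n 0) (0\<^sub>m 0 n) (0\<^sub>m 0 0)"
    have A'A: "A' = A" unfolding A'_def using A by (intro eq_matI) auto
    define Pm where "Pm = four_block_mat (1\<^sub>m n) (0\<^sub>m n 0) G (0\<^sub>m n 0)"
    define Qm where "Qm = four_block_mat (1\<^sub>m n) Am (0\<^sub>m 0 n) (0\<^sub>m 0 n)"
    have Pm: "Pm \<in> carrier_mat (n+n) n" unfolding Pm_def
      by (intro carrier_matI) auto
    have Qm: "Qm \<in> carrier_mat n (n+n)" unfolding Qm_def
      by (intro carrier_matI) auto
    have PA': "Pm * A' = four_block_mat A (0\<^sub>m n 0) (G * A) (0\<^sub>m n 0)"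
      unfolding Pm_def A'_def
      by (subst mult_four_block_mat[of _ n n _ 0 _ n], insert A G, auto)
    have PAQ: "Pm * A' * Qm = K"
      unfolding PA' Qm_def K_def P_def Q_def G1_def G_def[symmetric]
      by (subst mult_four_block_mat[of _ n n _ 0 _ n], insert A G Am, auto)
    define P' where "P' = four_block_mat (1\<^sub>m n :: complex mat) (0\<^sub>m n n) (0\<^sub>m 0 n) (0\<^sub>m 0 n)"
    define Q' where "Q' = four_block_mat (1\<^sub>m n :: complex mat) (0\<^sub>m n 0) (0\<^sub>m n n) (0\<^sub>m n 0)"
    have P': "P' \<in> carrier_mat n (n+n)" unfolding P'_def
      by (intro carrier_matI) auto
    have Q': "Q' \<in> carrier_mat (n+n) n" unfolding Q'_def
      by (intro carrier_matI) auto
    have PK: "P' * K = four_block_mat A (A * Am) (0\<^sub>m 0 n) (0\<^sub>m 0 n)"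
      unfolding P'_def K_def P_def Q_def
      by (subst mult_four_block_mat[of _ n n _ n _ 0], insert A G Am G1, auto)
    have PKQ: "P' * K * Q' = A"
      unfolding PK Q'_def
      by (subst mult_four_block_mat[of _ n n _ n _ 0], insert A G Am, auto intro!: eq_matI)
    have "crank K = vec_space.rank (n+n) (Pm * A' * Qm)" unfolding crank_def PAQ using K by simp
    also have "\<dots> \<le> vec_space.rank (n+n) (Pm * A')"
      by (rule rank_mult_right_le[OF _ Qm]) (use Pm A A'A in simp)
    also have "\<dots> \<le> vec_space.rank n A'"
      by (rule rank_mult_left_le[OF Pm]) (use A A'A in simp)
    also have "\<dots> = crank A" unfolding crank_def A'A using A by simp
    finally have le1: "crank K \<le> crank A" .
    have "crank A = vec_space.rank n (P' * K * Q')" unfolding crank_def PKQ using A by simp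
    also have "\<dots> \<le> vec_space.rank n (P' * K)"
      by (rule rank_mult_right_le[OF _ Q']) (use P' K in simp)
    also have "\<dots> \<le> vec_space.rank (n+n) K"
      by (rule rank_mult_left_le[OF P' K])
    also have "\<dots> = crank K" unfolding crank_def using K by simp
    finally have le2: "crank A \<le> crank K" .
    show ?thesis using le1 le2 unfolding K_def by simp
  qed
  have part2: "(let G1 = AGD * A * Am; M = 1\<^sub>m n - A * G1; N = 1\<^sub>m n - G1 * A in
            M * M = M \<and> N * N = N
          \<and> A ^\<^sub>m k * Am * M = 0\<^sub>m n n \<and> M * A ^\<^sub>m k = 0\<^sub>m n n
          \<and> N * A ^\<^sub>m k * Am = 0\<^sub>m n n \<and> A ^\<^sub>m k * N = 0\<^sub>m n n
          \<and> crank (four_block_mat A (1\<^sub>m n - M) (1\<^sub>m n - N) G1) = crank A)"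
    unfolding Let_def G1_def[symmetric] AG1 G1A P_def[symmetric] Q_def[symmetric]
    using idem_compl[OF P PP] idem_compl[OF Q QQ] i1 i2 i3 i4 rk
      one_minus_one_minus[OF P] one_minus_one_minus[OF Q] by simp
  moreover have "1\<^sub>m n - P \<in> carrier_mat n n" "1\<^sub>m n - Q \<in> carrier_mat n n" using P Q by auto
  ultimately show ?thesis using G1 
    unfolding Let_def G1_def[symmetric] AG1 G1A P_def[symmetric] Q_def[symmetric] by blast
qed

end
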